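(* On $S^3$ with its standard pseudohermitian structure, let $\phi\in C^\infty(S^3)$ be complex with $|\phi|<1$, $F=(1-|\phi|^2)^{-1/2}$, and consider the CR structure spanned by $Z_{\bar1}^\phi=F(Z_{\bar1}+\phi Z_1)$ with the same contact form $\theta$ and coframe $\theta^1_\phi=F(\theta^1-\phi\theta^{\bar1})$. Then its connection form and torsion are $$\theta_1{}^1{}_\phi=\theta_1{}^1-F^{-1}dF-F^{-1}(B_{11}\theta^1+B_{12}\theta^{\bar1}+B_{13}\theta),\qquad A^1{}_{\bar1}{}^\phi=-F^2(\phi_0-4i\phi),$$ where $B_{11}=F^2(-2F_1-F\bar\phi_{\bar1}-\bar\phi F\phi_1-2\bar\phi F_{\bar1})$, $B_{12}=F^2(2|\phi|^2F_{\bar1}+F\phi_1+\phi F\bar\phi_{\bar1}+2\phi F_1)$, $B_{13}=-\bar\phi F^3(\phi_0-4i\phi)$.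
   Context: $S^3=\{|z_1|^2+|z_2|^2=1\}\subset\mathbb{C}^2$, $\theta=\frac{i}{2}(\bar\partial u-\partial u)|_{S^3}$ with $u=|z_1|^2+|z_2|^2-1$; $Z_1=\bar z_2\partial_{z_1}-\bar z_1\partial_{z_2}$, $Z_{\bar1}=\overline{Z_1}$, $\theta^1=z_2dz_1-z_1dz_2$ (so $d\theta=i\theta^1\wedge\theta^{\bar1}$), Reeb field $T=i\sum_j(z_j\partial_{z_j}-\bar z_j\partial_{\bar z_j})$, standard connection form $\theta_1{}^1=-2i\theta$, zero torsion. For a coframe $\{\theta,\vartheta^1,\vartheta^{\bar1}\}$ with $d\theta=i\vartheta^1\wedge\vartheta^{\bar1}$, the connection form $\vartheta_1{}^1$ and torsion $\tau^1=A^1{}_{\bar1}\vartheta^{\bar1}$ are determined by $d\vartheta^1=\vartheta^1\wedge\vartheta_1{}^1+\theta\wedge\tau^1$, $\tau^1\equiv0\bmod\vartheta^{\bar1}$, $\vartheta_1{}^1+\vartheta_{\bar1}{}^{\bar1}=0$. Notation: $\phi_1=Z_1\phi$, $\bar\phi_{\bar1}=Z_{\bar1}\bar\phi$, $F_1=Z_1F$, $F_{\bar1}=Z_{\bar1}F$, $\phi_0=T\phi$. *)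

theory Defs
  imports "HOL-Analysis.Analysis"
begin

text \<open>A complex tangent vector at a point is
  written in the basis d/dz1, d/dz2, d/dzbar1, d/dzbar2 as a quadruple (a1,a2,b1,b2).
  A complex 1-form is written by its coefficients with respect to dz1, dz2, dzbar1, dzbar2.\<close>

type_synonym pt = "complex \<times> complex"
type_synonym cvec = "complex \<times> complex \<times> complex \<times> complex"
type_synonym form1 = "pt \<Rightarrow> complex \<times> complex \<times> complex \<times> complex"
type_synonym form2 = "pt \<Rightarrow> cvec \<Rightarrow> cvec \<Rightarrow> complex"

coinductive smooth_on :: "'a::real_normed_vector set \<Rightarrow> ('a \<Rightarrow> 'b::real_normed_vector) \<Rightarrow> bool" where
  "f differentiable_on S \<Longrightarrow> (\<forall>h. smooth_on S (\<lambda>p. frechet_derivative f (at p) h))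
     \<Longrightarrow> smooth_on S f"

definition S3 :: "pt set" where
  "S3 = {(z1, z2). (cmod z1)\<^sup>2 + (cmod z2)\<^sup>2 = 1}"

definition u_fun :: "pt \<Rightarrow> complex" where
  "u_fun p = (case p of (z1, z2) \<Rightarrow> of_real ((cmod z1)\<^sup>2 + (cmod z2)\<^sup>2 - 1))"

definition dz1 :: "(pt \<Rightarrow> complex) \<Rightarrow> pt \<Rightarrow> complex" where
  "dz1 f p = (frechet_derivative f (at p) (1, 0) - \<i> * frechet_derivative f (at p) (\<i>, 0)) / 2"
definition dz2 :: "(pt \<Rightarrow> complex) \<Rightarrow> pt \<Rightarrow> complex" where
  "dz2 f p = (frechet_derivative f (at p) (0, 1) - \<i> * frechet_derivative f (at p) (0, \<i>)) / 2"
definition dzb1 :: "(pt \<Rightarrow> complex) \<Rightarrow> pt \<Rightarrow> complex" where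
  "dzb1 f p = (frechet_derivative f (at p) (1, 0) + \<i> * frechet_derivative f (at p) (\<i>, 0)) / 2"
definition dzb2 :: "(pt \<Rightarrow> complex) \<Rightarrow> pt \<Rightarrow> complex" where
  "dzb2 f p = (frechet_derivative f (at p) (0, 1) + \<i> * frechet_derivative f (at p) (0, \<i>)) / 2"

definition vapp :: "cvec \<Rightarrow> (pt \<Rightarrow> complex) \<Rightarrow> pt \<Rightarrow> complex" where
  "vapp v f p = (case v of (a1, a2, b1, b2) \<Rightarrow>
      a1 * dz1 f p + a2 * dz2 f p + b1 * dzb1 f p + b2 * dzb2 f p)"

definition vfield :: "(pt \<Rightarrow> cvec) \<Rightarrow> (pt \<Rightarrow> complex) \<Rightarrow> pt \<Rightarrow> complex" where
  "vfield X f p = vapp (X p) f p"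

definition pairing :: "complex \<times> complex \<times> complex \<times> complex \<Rightarrow> cvec \<Rightarrow> complex" where
  "pairing w v = (case w of (c1, c2, c3, c4) \<Rightarrow> case v of (a1, a2, b1, b2) \<Rightarrow>
      c1 * a1 + c2 * a2 + c3 * b1 + c4 * b2)"

definition fadd :: "form1 \<Rightarrow> form1 \<Rightarrow> form1" where
  "fadd w e p = (case w p of (a1, a2, a3, a4) \<Rightarrow> case e p of (b1, b2, b3, b4) \<Rightarrow>
      (a1 + b1, a2 + b2, a3 + b3, a4 + b4))"
definition fscale :: "(pt \<Rightarrow> complex) \<Rightarrow> form1 \<Rightarrow> form1" where
  "fscale f w p = (case w p of (a1, a2, a3, a4) \<Rightarrow> (f p * a1, f p * a2, f p * a3, f p * a4))"
definition fminus :: "form1 \<Rightarrow> form1 \<Rightarrow> form1" where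
  "fminus w e = fadd w (fscale (\<lambda>_. -1) e)"
definition fconj :: "form1 \<Rightarrow> form1" where
  "fconj w p = (case w p of (c1, c2, c3, c4) \<Rightarrow> (cnj c3, cnj c4, cnj c1, cnj c2))"

definition dfun :: "(pt \<Rightarrow> complex) \<Rightarrow> form1" where
  "dfun f p = (dz1 f p, dz2 f p, dzb1 f p, dzb2 f p)"
definition delf :: "(pt \<Rightarrow> complex) \<Rightarrow> form1" where
  "delf f p = (dz1 f p, dz2 f p, 0, 0)"
definition delbarf :: "(pt \<Rightarrow> complex) \<Rightarrow> form1" where
  "delbarf f p = (0, 0, dzb1 f p, dzb2 f p)"

text \<open>wedge product of 1-forms and exterior derivative of a 1-form
  (d(sum c_k dx_k) = sum dc_k wedge dx_k), as 2-forms evaluated on pairs of vectors\<close>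
definition wedge :: "form1 \<Rightarrow> form1 \<Rightarrow> form2" where
  "wedge w e p X Y = pairing (w p) X * pairing (e p) Y - pairing (w p) Y * pairing (e p) X"

definition comp1 :: "complex \<times> complex \<times> complex \<times> complex \<Rightarrow> complex" where
  "comp1 v = fst v"
definition comp2 :: "complex \<times> complex \<times> complex \<times> complex \<Rightarrow> complex" where
  "comp2 v = fst (snd v)"
definition comp3 :: "complex \<times> complex \<times> complex \<times> complex \<Rightarrow> complex" where
  "comp3 v = fst (snd (snd v))"
definition comp4 :: "complex \<times> complex \<times> complex \<times> complex \<Rightarrow> complex" where
  "comp4 v = snd (snd (snd v))"

definition extd :: "form1 \<Rightarrow> form2" where
  "extd w p X Y =
     (vapp X (\<lambda>q. comp1 (w q)) p * comp1 Y - vapp Y (\<lambda>q. comp1 (w q)) p * comp1 X)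
   + (vapp X (\<lambda>q. comp2 (w q)) p * comp2 Y - vapp Y (\<lambda>q. comp2 (w q)) p * comp2 X)
   + (vapp X (\<lambda>q. comp3 (w q)) p * comp3 Y - vapp Y (\<lambda>q. comp3 (w q)) p * comp3 X)
   + (vapp X (\<lambda>q. comp4 (w q)) p * comp4 Y - vapp Y (\<lambda>q. comp4 (w q)) p * comp4 X)"

definition f2add :: "form2 \<Rightarrow> form2 \<Rightarrow> form2" where
  "f2add a b p X Y = a p X Y + b p X Y"

text \<open>complexified tangent vectors to S3 at p: those annihilated by du\<close>
definition tangent :: "pt \<Rightarrow> cvec \<Rightarrow> bool" where
  "tangent p v \<longleftrightarrow> pairing (dfun u_fun p) v = 0"

text \<open>equality of (pullbacks of) forms on S3\<close>
definition eq1_S3 :: "form1 \<Rightarrow> form1 \<Rightarrow> bool" where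
  "eq1_S3 w e \<longleftrightarrow> (\<forall>p\<in>S3. \<forall>v. tangent p v \<longrightarrow> pairing (w p) v = pairing (e p) v)"
definition eq2_S3 :: "form2 \<Rightarrow> form2 \<Rightarrow> bool" where
  "eq2_S3 a b \<longleftrightarrow> (\<forall>p\<in>S3. \<forall>X Y. tangent p X \<longrightarrow> tangent p Y \<longrightarrow> a p X Y = b p X Y)"

definition theta :: form1 where
  "theta = fscale (\<lambda>_. \<i> / 2) (fminus (delbarf u_fun) (delf u_fun))"
definition theta1 :: form1 where
  "theta1 p = (case p of (z1, z2) \<Rightarrow> (z2, - z1, 0, 0))"
definition theta1bar :: form1 where
  "theta1bar = fconj theta1"
definition Z1 :: "pt \<Rightarrow> cvec" where
  "Z1 p = (case p of (z1, z2) \<Rightarrow> (cnj z2, - cnj z1, 0, 0))"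
definition Z1bar :: "pt \<Rightarrow> cvec" where
  "Z1bar p = (case p of (z1, z2) \<Rightarrow> (0, 0, z2, - z1))"
definition Treeb :: "pt \<Rightarrow> cvec" where
  "Treeb p = (case p of (z1, z2) \<Rightarrow> (\<i> * z1, \<i> * z2, - \<i> * cnj z1, - \<i> * cnj z2))"
definition conn_std :: form1 where
  "conn_std = fscale (\<lambda>_. -2 * \<i>) theta"

definition is_conn_torsion :: "form1 \<Rightarrow> form1 \<Rightarrow> (pt \<Rightarrow> complex) \<Rightarrow> bool" where
  "is_conn_torsion vt1 om A \<longleftrightarrow>
     eq2_S3 (extd vt1) (f2add (wedge vt1 om) (wedge theta (fscale A (fconj vt1)))) \<and>
     eq1_S3 (fadd om (fconj om)) (\<lambda>_. (0, 0, 0, 0))"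

end

theory Submission
  imports Defs
begin

definition wvec :: "(pt \<Rightarrow> complex) \<Rightarrow> complex \<times> complex \<times> complex \<times> complex" where
  "wvec f' = ((f' (1,0) - \<i> * f' (\<i>,0))/2, (f' (0,1) - \<i> * f' (0,\<i>))/2,
              (f' (1,0) + \<i> * f' (\<i>,0))/2, (f' (0,1) + \<i> * f' (0,\<i>))/2)"

lemma dfun_wvec: "(f has_derivative f') (at p) \<Longrightarrow> dfun f p = wvec f'"
  by (drule frechet_derivative_at) (simp add: dfun_def wvec_def dz1_def dz2_def dzb1_def dzb2_def)

lemma vapp_pairing: "vapp v f p = pairing (dfun f p) v"
  by (cases v) (simp add: vapp_def pairing_def dfun_def algebra_simps)

lemma smooth_diff: assumes "smooth_on U f" "open U" "p \<in> U"
  shows "(f has_derivative frechet_derivative f (at p)) (at p)"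
proof -
  from assms(1) have "f differentiable_on U" by (cases rule: smooth_on.cases) auto
  then have "f differentiable (at p)" using assms(2,3) differentiable_onD at_within_open by metis
  then show ?thesis using frechet_derivative_works by blast
qed

lemma K_sq: assumes "0 < (r::real)" shows "(r powr (-1/2))^2 = 1 / r"
proof -
  have "(r powr (-1/2))^2 = r powr (-1/2) * r powr (-1/2)" by (simp add: power2_eq_square)
  also have "\<dots> = r powr (-1)" by (simp add: powr_add[symmetric])
  finally show ?thesis using assms by (simp add: powr_minus_divide)
qed

lemma F_deriv:
  fixes \<phi> :: "pt \<Rightarrow> complex"
  assumes D: "(\<phi> has_derivative D) (at p)" and small: "cmod (\<phi> p) < 1"
  defines "K \<equiv> (1 - (cmod (\<phi> p))\<^sup>2) powr (-1/2)"
  shows "((\<lambda>p. complex_of_real ((1 - (cmod (\<phi> p))\<^sup>2) powr (-1/2))) has_derivative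
          (\<lambda>h. of_real (K^3) * (cnj (\<phi> p) * D h + \<phi> p * cnj (D h)) / 2)) (at p)"
proof -
  define r where "r = 1 - (cmod (\<phi> p))\<^sup>2"
  have rpos: "0 < r" unfolding r_def using small
    by (simp add: abs_square_less_1)
  have eq: "(\<lambda>q. (cmod (\<phi> q))\<^sup>2) = (\<lambda>q. (Re (\<phi> q))\<^sup>2 + (Im (\<phi> q))\<^sup>2)"
    by (simp add: cmod_power2)
  have d0: "((\<lambda>q. 1 - ((Re (\<phi> q))\<^sup>2 + (Im (\<phi> q))\<^sup>2)) has_derivative
       (\<lambda>h. - (2 * Re (\<phi> p) * Re (D h) + 2 * Im (\<phi> p) * Im (D h)))) (at p)"
    by (rule has_derivative_eq_rhs, (rule derivative_intros D)+) (auto simp: fun_eq_iff power2_eq_square)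
  have d1: "((\<lambda>q. 1 - (cmod (\<phi> q))\<^sup>2) has_derivative
       (\<lambda>h. - (2 * Re (\<phi> p) * Re (D h) + 2 * Im (\<phi> p) * Im (D h)))) (at p)"
    using d0 by (simp add: cmod_power2)
  have d2: "((\<lambda>q. (1 - (cmod (\<phi> q))\<^sup>2) powr (-1/2)) has_derivative
       (\<lambda>h. (r powr (-1/2)) * (0 * ln r + (- (2 * Re (\<phi> p) * Re (D h) + 2 * Im (\<phi> p) * Im (D h)))
          * (-1/2) / r))) (at p)"
    using has_derivative_powr[OF d1 has_derivative_const[of "-1/2"]] rpos unfolding r_def by simp
  have K3: "K^3 = K / r" using K_sq[OF rpos] unfolding K_def r_def
    by (simp add: power3_eq_cube power2_eq_square field_simps)
  have d2': "((\<lambda>q. (1 - (cmod (\<phi> q))\<^sup>2) powr (-1/2)) has_derivative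
       (\<lambda>h. K^3 * (Re (\<phi> p) * Re (D h) + Im (\<phi> p) * Im (D h)))) (at p)"
  proof (rule has_derivative_eq_rhs[OF d2], rule ext)
    fix h
    have Kr: "r powr (-1/2) = K" unfolding K_def r_def by simp
    show "r powr (-1/2) * (0 * ln r + (- (2 * Re (\<phi> p) * Re (D h) + 2 * Im (\<phi> p) * Im (D h)))
          * (-1/2) / r) = K^3 * (Re (\<phi> p) * Re (D h) + Im (\<phi> p) * Im (D h))"
      unfolding Kr K3 using rpos by (simp add: field_simps)
  qed
  show ?thesis
  proof (rule has_derivative_eq_rhs[OF has_derivative_of_real[OF d2']], rule ext)
    fix h
    have "(cnj (\<phi> p) * D h + \<phi> p * cnj (D h)) = of_real (2 * (Re (\<phi> p) * Re (D h) + Im (\<phi> p) * Im (D h)))"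
      by (simp add: complex_eq_iff)
    then show "complex_of_real (K^3 * (Re (\<phi> p) * Re (D h) + Im (\<phi> p) * Im (D h))) =
       of_real (K^3) * (cnj (\<phi> p) * D h + \<phi> p * cnj (D h)) / 2"
      by simp
  qed
qed

lemma pairing_fadd: "pairing (fadd w e p) v = pairing (w p) v + pairing (e p) v"
  by (cases "w p"; cases "e p"; cases v) (simp add: fadd_def pairing_def algebra_simps)
lemma pairing_fscale: "pairing (fscale f w p) v = f p * pairing (w p) v"
  by (cases "w p"; cases v) (simp add: fscale_def pairing_def algebra_simps)
lemma pairing_fminus: "pairing (fminus w e p) v = pairing (w p) v - pairing (e p) v"
  by (simp add: fminus_def pairing_fadd pairing_fscale)
definition vconj :: "cvec \<Rightarrow> cvec" where
  "vconj v = (case v of (a1,a2,b1,b2) \<Rightarrow> (cnj b1, cnj b2, cnj a1, cnj a2))"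
lemma pairing_fconj: "pairing (fconj w p) v = cnj (pairing (w p) (vconj v))"
  by (cases "w p"; cases v) (simp add: fconj_def vconj_def pairing_def algebra_simps)

lemma pairing_dfun_mult:
  assumes "f differentiable (at p)" "g differentiable (at p)"
  shows "pairing (dfun (\<lambda>q. f q * g q) p) v = f p * pairing (dfun g p) v + g p * pairing (dfun f p) v"
proof -
  obtain f' g' where f: "(f has_derivative f') (at p)" and g: "(g has_derivative g') (at p)"
    using assms by (auto simp: differentiable_def)
  have "((\<lambda>q. f q * g q) has_derivative (\<lambda>h. f p * g' h + f' h * g p)) (at p)"
    using has_derivative_mult[OF f g] .
  from dfun_wvec[OF this] dfun_wvec[OF f] dfun_wvec[OF g] show ?thesis
    by (cases v) (simp add: wvec_def pairing_def field_simps)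
qed

lemma pairing_dfun_lin:
  assumes "bounded_linear g"
  shows "pairing (dfun g p) v = (case v of (a1,a2,b1,b2) \<Rightarrow>
      a1 * (g (1,0) - \<i> * g (\<i>,0))/2 + a2 * (g (0,1) - \<i> * g (0,\<i>))/2
    + b1 * (g (1,0) + \<i> * g (\<i>,0))/2 + b2 * (g (0,1) + \<i> * g (0,\<i>))/2)"
proof -
  have "(g has_derivative g) (at p)" using assms by (rule bounded_linear_imp_has_derivative)
  then show ?thesis by (cases v) (simp add: dfun_wvec wvec_def pairing_def field_simps)
qed

lemma bl_fst: "bounded_linear (\<lambda>q::pt. fst q)" by (rule bounded_linear_fst)
lemma bl_snd: "bounded_linear (\<lambda>q::pt. snd q)" by (rule bounded_linear_snd)
lemma bl_cfst: "bounded_linear (\<lambda>q::pt. cnj (fst q))"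
  by (rule bounded_linear_compose[OF bounded_linear_cnj bounded_linear_fst])
lemma bl_csnd: "bounded_linear (\<lambda>q::pt. cnj (snd q))"
  by (rule bounded_linear_compose[OF bounded_linear_cnj bounded_linear_snd])

lemma pd_fst: "pairing (dfun (\<lambda>q. fst q) p) v = fst v"
  by (cases v) (simp add: pairing_dfun_lin[OF bl_fst] field_simps)
lemma pd_snd: "pairing (dfun (\<lambda>q. snd q) p) v = fst (snd v)"
  by (cases v) (simp add: pairing_dfun_lin[OF bl_snd] field_simps)
lemma pd_cfst: "pairing (dfun (\<lambda>q. cnj (fst q)) p) v = fst (snd (snd v))"
  by (cases v) (simp add: pairing_dfun_lin[OF bl_cfst] field_simps)
lemma pd_csnd: "pairing (dfun (\<lambda>q. cnj (snd q)) p) v = snd (snd (snd v))"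
  by (cases v) (simp add: pairing_dfun_lin[OF bl_csnd] field_simps)

lemma pd_cnj:
  assumes "(f has_derivative f') (at p)"
  shows "pairing (dfun (\<lambda>q. cnj (f q)) p) v = cnj (pairing (dfun f p) (vconj v))"
proof -
  have "((\<lambda>q. cnj (f q)) has_derivative (\<lambda>h. cnj (f' h))) (at p)" using assms by (rule has_derivative_cnj)
  from dfun_wvec[OF this] dfun_wvec[OF assms] show ?thesis
    by (cases v) (simp add: wvec_def pairing_def vconj_def field_simps)
qed

definition vcomb :: "complex \<Rightarrow> complex \<Rightarrow> complex \<Rightarrow> cvec \<Rightarrow> cvec \<Rightarrow> cvec \<Rightarrow> cvec" where
  "vcomb x1 x2 x3 U V W = (case U of (u1,u2,u3,u4) \<Rightarrow> case V of (v1,v2,v3,v4) \<Rightarrow> case W of (w1,w2,w3,w4) \<Rightarrow>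
     (x1 * u1 + x2 * v1 + x3 * w1, x1 * u2 + x2 * v2 + x3 * w2, x1 * u3 + x2 * v3 + x3 * w3, x1 * u4 + x2 * v4 + x3 * w4))"

lemma pairing_vcomb: "pairing w (vcomb x1 x2 x3 U V W) = x1 * pairing w U + x2 * pairing w V + x3 * pairing w W"
  by (cases w; cases U; cases V; cases W) (simp add: vcomb_def pairing_def algebra_simps)

definition alt :: "complex \<times> complex \<times> complex \<times> complex \<Rightarrow> complex \<times> complex \<times> complex \<times> complex \<Rightarrow> cvec \<Rightarrow> cvec \<Rightarrow> complex" where
  "alt a b X Y = pairing a X * pairing b Y - pairing a Y * pairing b X"

definition bil2 :: "(cvec \<Rightarrow> cvec \<Rightarrow> complex) \<Rightarrow> bool" where
  "bil2 L \<longleftrightarrow> (\<forall>x1 x2 x3 y1 y2 y3 U V W. L (vcomb x1 x2 x3 U V W) (vcomb y1 y2 y3 U V W) =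
     (x1*y2 - x2*y1) * L U V + (x1*y3 - x3*y1) * L U W + (x2*y3 - x3*y2) * L V W)"

lemma bil2_alt: "bil2 (alt a b)"
  unfolding bil2_def alt_def pairing_vcomb by (intro allI) algebra

lemma bil2D: "bil2 L \<Longrightarrow> L (vcomb x1 x2 x3 U V W) (vcomb y1 y2 y3 U V W) =
     (x1*y2 - x2*y1) * L U V + (x1*y3 - x3*y1) * L U W + (x2*y3 - x3*y2) * L V W"
  unfolding bil2_def by blast

lemma bil2_add: assumes "bil2 L" "bil2 M" shows "bil2 (\<lambda>X Y. L X Y + M X Y)"
  unfolding bil2_def
proof (intro allI)
  fix x1 x2 x3 y1 y2 y3 U V W
  show "L (vcomb x1 x2 x3 U V W) (vcomb y1 y2 y3 U V W) + M (vcomb x1 x2 x3 U V W) (vcomb y1 y2 y3 U V W) =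
    (x1 * y2 - x2 * y1) * (L U V + M U V) + (x1 * y3 - x3 * y1) * (L U W + M U W) + (x2 * y3 - x3 * y2) * (L V W + M V W)"
    unfolding bil2D[OF assms(1)] bil2D[OF assms(2)] by (simp add: algebra_simps)
qed

definition e1 :: cvec where "e1 = (1,0,0,0)"
definition e2 :: cvec where "e2 = (0,1,0,0)"
definition e3 :: cvec where "e3 = (0,0,1,0)"
definition e4 :: cvec where "e4 = (0,0,0,1)"

lemma extd_alt: "extd w p X Y =
   alt (dfun (\<lambda>q. comp1 (w q)) p) e1 X Y + alt (dfun (\<lambda>q. comp2 (w q)) p) e2 X Y
 + alt (dfun (\<lambda>q. comp3 (w q)) p) e3 X Y + alt (dfun (\<lambda>q. comp4 (w q)) p) e4 X Y"
  by (cases X; cases Y) (simp add: extd_def alt_def vapp_pairing e1_def e2_def e3_def e4_def pairing_def comp1_def comp2_def comp3_def comp4_def)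

lemma bil2_extd: "bil2 (extd w p)"
proof -
  have "extd w p = (\<lambda>X Y. (alt (dfun (\<lambda>q. comp1 (w q)) p) e1 X Y + alt (dfun (\<lambda>q. comp2 (w q)) p) e2 X Y
 + alt (dfun (\<lambda>q. comp3 (w q)) p) e3 X Y) + alt (dfun (\<lambda>q. comp4 (w q)) p) e4 X Y)"
    by (simp add: fun_eq_iff extd_alt)
  then show ?thesis by (simp only: bil2_add bil2_alt)
qed

lemma bil2_wedge: "bil2 (wedge w e p)"
proof -
  have "wedge w e p = alt (w p) (e p)" by (simp add: fun_eq_iff wedge_def alt_def)
  then show ?thesis by (simp add: bil2_alt)
qed

lemma bil2_f2add: "bil2 (a p) \<Longrightarrow> bil2 (b p) \<Longrightarrow> bil2 (f2add a b p)"
proof -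
  assume "bil2 (a p)" "bil2 (b p)"
  moreover have "f2add a b p = (\<lambda>X Y. a p X Y + b p X Y)" by (simp add: fun_eq_iff f2add_def)
  ultimately show ?thesis by (simp add: bil2_add)
qed

lemma bil2_eq:
  assumes "bil2 L" "bil2 M" "L U V = M U V" "L U W = M U W" "L V W = M V W"
  shows "L (vcomb x1 x2 x3 U V W) (vcomb y1 y2 y3 U V W) = M (vcomb x1 x2 x3 U V W) (vcomb y1 y2 y3 U V W)"
  unfolding bil2D[OF assms(1)] bil2D[OF assms(2)] assms(3-5) ..

lemma u_fun_eq: "u_fun = (\<lambda>q. fst q * cnj (fst q) + snd q * cnj (snd q) - 1)"
  by (auto simp: fun_eq_iff u_fun_def complex_norm_square[symmetric])

lemma dfun_u: "dfun u_fun (z1, z2) = (cnj z1, cnj z2, z1, z2)"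
proof -
  have "(u_fun has_derivative (\<lambda>h. fst h * cnj z1 + z1 * cnj (fst h) + (snd h * cnj z2 + z2 * cnj (snd h)))) (at (z1,z2))"
    unfolding u_fun_eq
    by (rule has_derivative_eq_rhs, (rule derivative_intros)+) (auto simp: fun_eq_iff algebra_simps)
  from dfun_wvec[OF this] have "dfun u_fun (z1,z2) = wvec (\<lambda>h. fst h * cnj z1 + z1 * cnj (fst h) + (snd h * cnj z2 + z2 * cnj (snd h)))" .
  also have "\<dots> = (cnj z1, cnj z2, z1, z2)" by (simp add: wvec_def field_simps)
  finally show ?thesis .
qed

lemma tangent_iff: "tangent (z1,z2) v \<longleftrightarrow> pairing (cnj z1, cnj z2, z1, z2) v = 0"
  by (simp add: tangent_def dfun_u)

lemma theta_at: "theta (z1,z2) = (-\<i>/2 * cnj z1, -\<i>/2 * cnj z2, \<i>/2 * z1, \<i>/2 * z2)"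
proof -
  have h: "dz1 u_fun (z1,z2) = cnj z1" "dz2 u_fun (z1,z2) = cnj z2" "dzb1 u_fun (z1,z2) = z1" "dzb2 u_fun (z1,z2) = z2"
    using dfun_u[unfolded dfun_def] by simp_all
  show ?thesis by (simp add: theta_def fscale_def fminus_def fadd_def delf_def delbarf_def h)
qed

lemma S3_rel: "(z1,z2) \<in> S3 \<Longrightarrow> z1 * cnj z1 + z2 * cnj z2 = 1"
proof -
  assume "(z1,z2) \<in> S3"
  then have "(cmod z1)\<^sup>2 + (cmod z2)\<^sup>2 = 1" by (simp add: S3_def)
  then have "complex_of_real ((cmod z1)\<^sup>2 + (cmod z2)\<^sup>2) = 1" by simp
  then show ?thesis by (simp only: of_real_add complex_norm_square)
qed

lemma decomp:
  assumes S: "z1 * cnj z1 + z2 * cnj z2 = 1" and T: "tangent (z1,z2) X"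
  shows "X = vcomb (pairing (theta1 (z1,z2)) X) (pairing (theta1bar (z1,z2)) X) (pairing (theta (z1,z2)) X)
            (Z1 (z1,z2)) (Z1bar (z1,z2)) (Treeb (z1,z2))"
proof -
  obtain a b c d where X: "X = (a,b,c,d)" by (cases X) auto
  have t: "cnj z1 * a + cnj z2 * b + z1 * c + z2 * d = 0" using T by (simp add: tangent_iff X pairing_def)
  show ?thesis unfolding X
    apply (simp add: vcomb_def theta_at theta1bar_def theta1_def fconj_def Z1_def Z1bar_def Treeb_def pairing_def)
    apply (intro conjI)
    using S t by (simp add: field_simps, algebra)+
qed

lemma bl_nfst: "bounded_linear (\<lambda>q::pt. - fst q)"
  by (rule bounded_linear_minus[OF bounded_linear_fst])
lemma bl_ncsnd: "bounded_linear (\<lambda>q::pt. - cnj (snd q))"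
  by (rule bounded_linear_minus[OF bl_csnd])
lemma pd_nfst: "pairing (dfun (\<lambda>q. - fst q) p) v = - fst v"
  by (cases v) (simp add: pairing_dfun_lin[OF bl_nfst] field_simps)
lemma pd_ncsnd: "pairing (dfun (\<lambda>q. - cnj (snd q)) p) v = - snd (snd (snd v))"
  by (cases v) (simp add: pairing_dfun_lin[OF bl_ncsnd] field_simps)

lemma vt1_fun: "fscale F (fminus theta1 (fscale \<phi> theta1bar)) =
  (\<lambda>q. (F q * snd q, F q * (- fst q), F q * (\<phi> q * (- cnj (snd q))), F q * (\<phi> q * cnj (fst q))))"
  by (auto simp: fun_eq_iff fscale_def fminus_def fadd_def theta1_def theta1bar_def fconj_def)

lemma vt1_pairing: "pairing (fscale F (fminus theta1 (fscale \<phi> theta1bar)) p) v =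
   F p * (pairing (theta1 p) v - \<phi> p * pairing (theta1bar p) v)"
  by (simp add: pairing_fscale pairing_fminus)

lemma extd_vt1:
  assumes dF: "F differentiable (at p)" and dp: "\<phi> differentiable (at p)" and p: "p = (z1,z2)"
  shows "extd (fscale F (fminus theta1 (fscale \<phi> theta1bar))) p X Y =
     (F p * fst (snd X) + z2 * pairing (dfun F p) X) * fst Y
   - (F p * fst (snd Y) + z2 * pairing (dfun F p) Y) * fst X
   + ((F p * (- fst X) + (- z1) * pairing (dfun F p) X) * fst (snd Y)
   - (F p * (- fst Y) + (- z1) * pairing (dfun F p) Y) * fst (snd X))
   + ((F p * (\<phi> p * (- snd (snd (snd X))) + (- cnj z2) * pairing (dfun \<phi> p) X) + \<phi> p * (- cnj z2) * pairing (dfun F p) X) * fst (snd (snd Y))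
   - (F p * (\<phi> p * (- snd (snd (snd Y))) + (- cnj z2) * pairing (dfun \<phi> p) Y) + \<phi> p * (- cnj z2) * pairing (dfun F p) Y) * fst (snd (snd X)))
   + ((F p * (\<phi> p * fst (snd (snd X)) + cnj z1 * pairing (dfun \<phi> p) X) + \<phi> p * cnj z1 * pairing (dfun F p) X) * snd (snd (snd Y))
   - (F p * (\<phi> p * fst (snd (snd Y)) + cnj z1 * pairing (dfun \<phi> p) Y) + \<phi> p * cnj z1 * pairing (dfun F p) Y) * snd (snd (snd X)))"
proof -
  have d_snd: "(\<lambda>q::pt. snd q) differentiable (at p)" by (rule bounded_linear_imp_differentiable[OF bl_snd])
  have d_nfst: "(\<lambda>q::pt. - fst q) differentiable (at p)" by (rule bounded_linear_imp_differentiable[OF bl_nfst])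
  have d_ncsnd: "(\<lambda>q::pt. - cnj (snd q)) differentiable (at p)" by (rule bounded_linear_imp_differentiable[OF bl_ncsnd])
  have d_cfst: "(\<lambda>q::pt. cnj (fst q)) differentiable (at p)" by (rule bounded_linear_imp_differentiable[OF bl_cfst])
  have d3: "(\<lambda>q. \<phi> q * - cnj (snd q)) differentiable (at p)" using dp d_ncsnd by (rule differentiable_mult)
  have d4: "(\<lambda>q. \<phi> q * cnj (fst q)) differentiable (at p)" using dp d_cfst by (rule differentiable_mult)
  have c1: "(\<lambda>q. comp1 (fscale F (fminus theta1 (fscale \<phi> theta1bar)) q)) = (\<lambda>q. F q * snd q)"
    by (simp add: vt1_fun comp1_def)
  have c2: "(\<lambda>q. comp2 (fscale F (fminus theta1 (fscale \<phi> theta1bar)) q)) = (\<lambda>q. F q * (- fst q))"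
    by (simp add: vt1_fun comp2_def)
  have c3: "(\<lambda>q. comp3 (fscale F (fminus theta1 (fscale \<phi> theta1bar)) q)) = (\<lambda>q. F q * (\<phi> q * (- cnj (snd q))))"
    by (simp add: vt1_fun comp3_def)
  have c4: "(\<lambda>q. comp4 (fscale F (fminus theta1 (fscale \<phi> theta1bar)) q)) = (\<lambda>q. F q * (\<phi> q * cnj (fst q)))"
    by (simp add: vt1_fun comp4_def)
  show ?thesis
    unfolding extd_alt c1 c2 c3 c4 alt_def
    unfolding pairing_dfun_mult[OF dF d_snd] pairing_dfun_mult[OF dF d_nfst] pairing_dfun_mult[OF dF d3]
      pairing_dfun_mult[OF dF d4] pairing_dfun_mult[OF dp d_ncsnd] pairing_dfun_mult[OF dp d_cfst]
      pd_snd pd_nfst pd_ncsnd pd_cfst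
    by (cases X; cases Y) (simp add: p e1_def e2_def e3_def e4_def pairing_def algebra_simps)
qed

lemma dual_basis:
  assumes S: "z1 * cnj z1 + z2 * cnj z2 = 1"
  shows "pairing (theta1 (z1,z2)) (Z1 (z1,z2)) = 1" "pairing (theta1 (z1,z2)) (Z1bar (z1,z2)) = 0" "pairing (theta1 (z1,z2)) (Treeb (z1,z2)) = 0" "pairing (theta1bar (z1,z2)) (Z1 (z1,z2)) = 0" "pairing (theta1bar (z1,z2)) (Z1bar (z1,z2)) = 1" "pairing (theta1bar (z1,z2)) (Treeb (z1,z2)) = 0" "pairing (theta (z1,z2)) (Z1 (z1,z2)) = 0" "pairing (theta (z1,z2)) (Z1bar (z1,z2)) = 0" "pairing (theta (z1,z2)) (Treeb (z1,z2)) = 1"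
proof -
  show "pairing (theta1 (z1,z2)) (Z1 (z1,z2)) = 1"
    using S by (simp add: theta1_def theta1bar_def fconj_def theta_at Z1_def Z1bar_def Treeb_def pairing_def field_simps, algebra?)
  show "pairing (theta1 (z1,z2)) (Z1bar (z1,z2)) = 0"
    using S by (simp add: theta1_def theta1bar_def fconj_def theta_at Z1_def Z1bar_def Treeb_def pairing_def field_simps, algebra?)
  show "pairing (theta1 (z1,z2)) (Treeb (z1,z2)) = 0"
    using S by (simp add: theta1_def theta1bar_def fconj_def theta_at Z1_def Z1bar_def Treeb_def pairing_def field_simps, algebra?)
  show "pairing (theta1bar (z1,z2)) (Z1 (z1,z2)) = 0"
    using S by (simp add: theta1_def theta1bar_def fconj_def theta_at Z1_def Z1bar_def Treeb_def pairing_def field_simps, algebra?)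
  show "pairing (theta1bar (z1,z2)) (Z1bar (z1,z2)) = 1"
    using S by (simp add: theta1_def theta1bar_def fconj_def theta_at Z1_def Z1bar_def Treeb_def pairing_def field_simps, algebra?)
  show "pairing (theta1bar (z1,z2)) (Treeb (z1,z2)) = 0"
    using S by (simp add: theta1_def theta1bar_def fconj_def theta_at Z1_def Z1bar_def Treeb_def pairing_def field_simps, algebra?)
  show "pairing (theta (z1,z2)) (Z1 (z1,z2)) = 0"
    using S by (simp add: theta1_def theta1bar_def fconj_def theta_at Z1_def Z1bar_def Treeb_def pairing_def field_simps, algebra?)
  show "pairing (theta (z1,z2)) (Z1bar (z1,z2)) = 0"
    using S by (simp add: theta1_def theta1bar_def fconj_def theta_at Z1_def Z1bar_def Treeb_def pairing_def field_simps, algebra?)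
  show "pairing (theta (z1,z2)) (Treeb (z1,z2)) = 1"
    using S by (simp add: theta1_def theta1bar_def fconj_def theta_at Z1_def Z1bar_def Treeb_def pairing_def field_simps, algebra?)
qed

lemma vconj_basis: "vconj (Z1 (z1,z2)) = Z1bar (z1,z2)" "vconj (Z1bar (z1,z2)) = Z1 (z1,z2)"
   "vconj (Treeb (z1,z2)) = Treeb (z1,z2)"
  by (simp_all add: vconj_def Z1_def Z1bar_def Treeb_def)

lemma tangent_basis: "tangent (z1,z2) (Z1 (z1,z2))" "tangent (z1,z2) (Z1bar (z1,z2))" "tangent (z1,z2) (Treeb (z1,z2))"
  by (simp_all add: tangent_iff Z1_def Z1bar_def Treeb_def pairing_def algebra_simps)

lemma rhs_pairs:
  fixes om :: form1 and A F \<phi> :: "pt \<Rightarrow> complex"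
  assumes S: "z1 * cnj z1 + z2 * cnj z2 = 1"
  defines "vt \<equiv> fscale F (fminus theta1 (fscale \<phi> theta1bar))"
  defines "R \<equiv> f2add (wedge vt om) (wedge theta (fscale A (fconj vt)))"
  defines "p \<equiv> (z1,z2)"
  shows "R p (Z1 p) (Z1bar p) = F p * pairing (om p) (Z1bar p) + F p * \<phi> p * pairing (om p) (Z1 p)"
    "R p (Z1 p) (Treeb p) = F p * pairing (om p) (Treeb p) + A p * cnj (F p) * cnj (\<phi> p)"
    "R p (Z1bar p) (Treeb p) = - (F p * \<phi> p * pairing (om p) (Treeb p)) - A p * cnj (F p)"
  unfolding R_def f2add_def wedge_def vt_def p_def
  by (simp_all add: pairing_fminus pairing_fscale pairing_fconj vconj_basis dual_basis[OF S] algebra_simps)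

lemma pd_F:
  fixes \<phi> :: "pt \<Rightarrow> complex"
  assumes D: "(\<phi> has_derivative D) (at p)" and small: "cmod (\<phi> p) < 1"
  defines "F \<equiv> \<lambda>p. complex_of_real ((1 - (cmod (\<phi> p))\<^sup>2) powr (-1/2))"
  shows "pairing (dfun F p) v = (F p)^3 / 2 * (cnj (\<phi> p) * pairing (dfun \<phi> p) v + \<phi> p * cnj (pairing (dfun \<phi> p) (vconj v)))"
proof -
  have "(F has_derivative (\<lambda>h. of_real (((1 - (cmod (\<phi> p))\<^sup>2) powr (-1/2))^3) * (cnj (\<phi> p) * D h + \<phi> p * cnj (D h)) / 2)) (at p)"
    unfolding F_def by (rule F_deriv[OF D small])
  from dfun_wvec[OF this] dfun_wvec[OF D] show ?thesis
    by (cases v) (simp add: wvec_def pairing_def vconj_def F_def field_simps)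
qed

theorem corollary4p2:
  fixes \<phi> :: "pt \<Rightarrow> complex" and U :: "pt set"
  assumes U_open: "open U" and U_S3: "S3 \<subseteq> U"
    and smooth: "smooth_on U \<phi>"
    and small: "\<forall>p\<in>S3. cmod (\<phi> p) < 1"
  defines "F \<equiv> \<lambda>p. complex_of_real ((1 - (cmod (\<phi> p))\<^sup>2) powr (-1/2))"
  defines "vt1 \<equiv> fscale F (fminus theta1 (fscale \<phi> theta1bar))"
  defines "\<phi>1 \<equiv> vfield Z1 \<phi>" and "\<phi>b1 \<equiv> vfield Z1bar (\<lambda>p. cnj (\<phi> p))"
  defines "F1 \<equiv> vfield Z1 F" and "Fb1 \<equiv> vfield Z1bar F" and "\<phi>0 \<equiv> vfield Treeb \<phi>"
  defines "B11 \<equiv> \<lambda>p. (F p)\<^sup>2 * (- 2 * F1 p - F p * \<phi>b1 p - cnj (\<phi> p) * F p * \<phi>1 p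
                                  - 2 * cnj (\<phi> p) * Fb1 p)"
  defines "B12 \<equiv> \<lambda>p. (F p)\<^sup>2 * (2 * of_real ((cmod (\<phi> p))\<^sup>2) * Fb1 p + F p * \<phi>1 p
                                  + \<phi> p * F p * \<phi>b1 p + 2 * \<phi> p * F1 p)"
  defines "B13 \<equiv> \<lambda>p. - cnj (\<phi> p) * (F p) ^ 3 * (\<phi>0 p - 4 * \<i> * \<phi> p)"
  defines "om \<equiv> fminus (fminus conn_std (fscale (\<lambda>p. inverse (F p)) (dfun F)))
                  (fscale (\<lambda>p. inverse (F p))
                     (fadd (fadd (fscale B11 theta1) (fscale B12 theta1bar)) (fscale B13 theta)))"
  defines "A \<equiv> \<lambda>p. - (F p)\<^sup>2 * (\<phi>0 p - 4 * \<i> * \<phi> p)"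
  shows "is_conn_torsion vt1 om A \<and>
         (\<forall>om' A'. is_conn_torsion vt1 om' A' \<longrightarrow> eq1_S3 om' om \<and> (\<forall>p\<in>S3. A' p = A p))"
proof -
  have small': "cmod (\<phi> p) < 1" if "p \<in> S3" for p using small that by blast
  have hphi: "(\<phi> has_derivative frechet_derivative \<phi> (at p)) (at p)" if "p \<in> S3" for p
    using smooth_diff[OF smooth U_open] U_S3 that by blast
  have dphi: "\<phi> differentiable (at p)" if "p \<in> S3" for p using hphi[OF that] by (rule differentiableI)
  have dF: "F differentiable (at p)" if "p \<in> S3" for p
    unfolding F_def using F_deriv[OF hphi[OF that] small'[OF that]] by (rule differentiableI)
  have pdF: "pairing (dfun F p) v = (F p)^3 / 2 * (cnj (\<phi> p) * pairing (dfun \<phi> p) v + \<phi> p * cnj (pairing (dfun \<phi> p) (vconj v)))"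
    if "p \<in> S3" for p v unfolding F_def by (rule pd_F[OF hphi[OF that] small'[OF that]])
  have Freal: "cnj (F q) = F q" for q by (simp add: F_def)
  have rpos: "0 < 1 - (cmod (\<phi> p))\<^sup>2" if "p \<in> S3" for p
    using small'[OF that] by (simp add: abs_square_less_1)
  have Fne: "F p \<noteq> 0" if "p \<in> S3" for p using rpos[OF that] by (simp add: F_def)
  have Frel: "(F p)^2 * (1 - \<phi> p * cnj (\<phi> p)) = 1" if "p \<in> S3" for p
  proof -
    have "((1 - (cmod (\<phi> p))\<^sup>2) powr (-1/2))^2 * (1 - (cmod (\<phi> p))\<^sup>2) = 1"
      using K_sq[OF rpos[OF that]] rpos[OF that] by simp
    then have "complex_of_real (((1 - (cmod (\<phi> p))\<^sup>2) powr (-1/2))^2 * (1 - (cmod (\<phi> p))\<^sup>2)) = 1" by simp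
    then show ?thesis by (simp add: F_def complex_norm_square[symmetric])
  qed
  have om_pair: "pairing (om p) v = -2 * \<i> * pairing (theta p) v - inverse (F p) * pairing (dfun F p) v
     - inverse (F p) * (B11 p * pairing (theta1 p) v + B12 p * pairing (theta1bar p) v + B13 p * pairing (theta p) v)" for p v
    by (simp add: om_def conn_std_def pairing_fminus pairing_fscale pairing_fadd)
  have cnjphi1: "vfield Z1bar (\<lambda>p. cnj (\<phi> p)) (z1,z2) = cnj (pairing (dfun \<phi> (z1,z2)) (Z1 (z1,z2)))"
    if "(z1,z2) \<in> S3" for z1 z2
    by (simp add: vfield_def vapp_pairing pd_cnj[OF hphi[OF that]] vconj_basis)
  have vf: "vfield X f p = pairing (dfun f p) (X p)" for X f p by (simp add: vfield_def vapp_pairing)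
  have pair12: "extd vt1 (z1,z2) (Z1 (z1,z2)) (Z1bar (z1,z2)) =
      f2add (wedge vt1 om) (wedge theta (fscale A (fconj vt1))) (z1,z2) (Z1 (z1,z2)) (Z1bar (z1,z2))"
    if p: "(z1,z2) \<in> S3" for z1 z2
  proof -
    have S: "z1 * cnj z1 + z2 * cnj z2 = 1" using S3_rel[OF p] .
    show ?thesis
      unfolding vt1_def rhs_pairs[OF S] extd_vt1[OF dF[OF p] dphi[OF p] refl] om_pair dual_basis[OF S]
      unfolding B11_def B12_def B13_def \<phi>1_def \<phi>b1_def F1_def Fb1_def \<phi>0_def cnjphi1[OF p] vf complex_norm_square
      using Fne[OF p]
      apply (simp add: Z1_def Z1bar_def Treeb_def field_simps)
      using S Frel[OF p] i_squared by algebra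
  qed
  have pair13: "extd vt1 (z1,z2) (Z1 (z1,z2)) (Treeb (z1,z2)) =
      f2add (wedge vt1 om) (wedge theta (fscale A (fconj vt1))) (z1,z2) (Z1 (z1,z2)) (Treeb (z1,z2))"
    if p: "(z1,z2) \<in> S3" for z1 z2
  proof -
    have S: "z1 * cnj z1 + z2 * cnj z2 = 1" using S3_rel[OF p] .
    show ?thesis
      unfolding vt1_def rhs_pairs[OF S] extd_vt1[OF dF[OF p] dphi[OF p] refl] om_pair dual_basis[OF S]
      unfolding B11_def B12_def B13_def A_def \<phi>1_def \<phi>b1_def F1_def Fb1_def \<phi>0_def cnjphi1[OF p] vf complex_norm_square
      using Fne[OF p]
      apply (simp add: Z1_def Z1bar_def Treeb_def Freal field_simps)
      using S Frel[OF p] i_squared by algebra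
  qed
  have pair23: "extd vt1 (z1,z2) (Z1bar (z1,z2)) (Treeb (z1,z2)) =
      f2add (wedge vt1 om) (wedge theta (fscale A (fconj vt1))) (z1,z2) (Z1bar (z1,z2)) (Treeb (z1,z2))"
    if p: "(z1,z2) \<in> S3" for z1 z2
  proof -
    have S: "z1 * cnj z1 + z2 * cnj z2 = 1" using S3_rel[OF p] .
    show ?thesis
      unfolding vt1_def rhs_pairs[OF S] extd_vt1[OF dF[OF p] dphi[OF p] refl] om_pair dual_basis[OF S]
      unfolding B11_def B12_def B13_def A_def \<phi>1_def \<phi>b1_def F1_def Fb1_def \<phi>0_def cnjphi1[OF p] vf complex_norm_square
      using Fne[OF p]
      apply (simp add: Z1_def Z1bar_def Treeb_def Freal field_simps)
      using S Frel[OF p] i_squared by algebra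
  qed
  have eq2: "eq2_S3 (extd vt1) (f2add (wedge vt1 om) (wedge theta (fscale A (fconj vt1))))"
    unfolding eq2_S3_def
  proof (intro ballI allI impI)
    fix p X Y assume p: "p \<in> S3" and X: "tangent p X" and Y: "tangent p Y"
    obtain z1 z2 where pz: "p = (z1,z2)" by (cases p)
    have S: "z1 * cnj z1 + z2 * cnj z2 = 1" using S3_rel p pz by blast
    obtain x1 x2 x3 where Xe: "X = vcomb x1 x2 x3 (Z1 (z1,z2)) (Z1bar (z1,z2)) (Treeb (z1,z2))"
      using decomp[OF S X[unfolded pz]] by blast
    obtain y1 y2 y3 where Ye: "Y = vcomb y1 y2 y3 (Z1 (z1,z2)) (Z1bar (z1,z2)) (Treeb (z1,z2))"
      using decomp[OF S Y[unfolded pz]] by blast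
    show "extd vt1 p X Y = f2add (wedge vt1 om) (wedge theta (fscale A (fconj vt1))) p X Y"
      unfolding pz Xe Ye
      by (rule bil2_eq[OF bil2_extd bil2_f2add[OF bil2_wedge bil2_wedge]])
         (use pair12 pair13 pair23 p pz in auto)
  qed
  have cnjphi2: "pairing (dfun (\<lambda>p. cnj (\<phi> p)) (z1,z2)) (Z1bar (z1,z2)) = cnj (pairing (dfun \<phi> (z1,z2)) (Z1 (z1,z2)))"
    if "(z1,z2) \<in> S3" for z1 z2
    by (simp add: pd_cnj[OF hphi[OF that]] vconj_basis)
  have real_basis: "pairing (om (z1,z2)) E + cnj (pairing (om (z1,z2)) (vconj E)) = 0"
    if p: "(z1,z2) \<in> S3" and E: "E \<in> {Z1 (z1,z2), Z1bar (z1,z2), Treeb (z1,z2)}" for z1 z2 E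
  proof -
    have S: "z1 * cnj z1 + z2 * cnj z2 = 1" using S3_rel[OF p] .
    have "pairing (om (z1,z2)) E + cnj (pairing (om (z1,z2)) (vconj E)) = 0" if e: "E = Z1 (z1,z2)" for E
      unfolding e vconj_basis om_pair dual_basis[OF S]
      unfolding B11_def B12_def B13_def \<phi>1_def \<phi>b1_def F1_def Fb1_def \<phi>0_def vf complex_norm_square
        pdF[OF p] vconj_basis cnjphi2[OF p]
      using Fne[OF p]
      apply (simp add: Z1_def Z1bar_def Treeb_def Freal field_simps)
      using S Frel[OF p] i_squared by algebra
    moreover
    have "pairing (om (z1,z2)) E + cnj (pairing (om (z1,z2)) (vconj E)) = 0" if e: "E = Z1bar (z1,z2)" for E
      unfolding e vconj_basis om_pair dual_basis[OF S]
      unfolding B11_def B12_def B13_def \<phi>1_def \<phi>b1_def F1_def Fb1_def \<phi>0_def vf complex_norm_square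
        pdF[OF p] vconj_basis cnjphi2[OF p]
      using Fne[OF p]
      apply (simp add: Z1_def Z1bar_def Treeb_def Freal field_simps)
      using S Frel[OF p] i_squared by algebra
    moreover
    have "pairing (om (z1,z2)) E + cnj (pairing (om (z1,z2)) (vconj E)) = 0" if e: "E = Treeb (z1,z2)" for E
      unfolding e vconj_basis om_pair dual_basis[OF S]
      unfolding B11_def B12_def B13_def \<phi>1_def \<phi>b1_def F1_def Fb1_def \<phi>0_def vf complex_norm_square
        pdF[OF p] vconj_basis cnjphi2[OF p]
      using Fne[OF p]
      by (simp add: Z1_def Z1bar_def Treeb_def Freal field_simps)
    ultimately show ?thesis using E by blast
  qed
  have real: "eq1_S3 (fadd om (fconj om)) (\<lambda>_. (0, 0, 0, 0))"
    unfolding eq1_S3_def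
  proof (intro ballI allI impI)
    fix p X assume p: "p \<in> S3" and X: "tangent p X"
    obtain z1 z2 where pz: "p = (z1,z2)" by (cases p)
    have S: "z1 * cnj z1 + z2 * cnj z2 = 1" using S3_rel p pz by blast
    obtain x1 x2 x3 where Xe: "X = vcomb x1 x2 x3 (Z1 (z1,z2)) (Z1bar (z1,z2)) (Treeb (z1,z2))"
      using decomp[OF S X[unfolded pz]] by blast
    have "pairing (fadd om (fconj om) p) E = 0" if "E \<in> {Z1 (z1,z2), Z1bar (z1,z2), Treeb (z1,z2)}" for E
      unfolding pairing_fadd pairing_fconj pz using real_basis[OF p[unfolded pz] that] .
    then have a: "pairing (fadd om (fconj om) p) (Z1 (z1,z2)) = 0" "pairing (fadd om (fconj om) p) (Z1bar (z1,z2)) = 0"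
      "pairing (fadd om (fconj om) p) (Treeb (z1,z2)) = 0" by auto
    have z: "pairing (0, 0, 0, 0) X = 0" by (cases X) (simp add: pairing_def)
    show "pairing (fadd om (fconj om) p) X = pairing (0, 0, 0, 0) X"
      unfolding z unfolding Xe pairing_vcomb a by simp
  qed
  have uniq: "eq1_S3 om' om \<and> (\<forall>p\<in>S3. A' p = A p)" if h: "is_conn_torsion vt1 om' A'" for om' A'
  proof -
    have eq2': "eq2_S3 (extd vt1) (f2add (wedge vt1 om') (wedge theta (fscale A' (fconj vt1))))"
      and real': "eq1_S3 (fadd om' (fconj om')) (\<lambda>_. (0, 0, 0, 0))"
      using h unfolding is_conn_torsion_def by auto
    have pw: "pairing (om' (z1,z2)) (Z1 (z1,z2)) = pairing (om (z1,z2)) (Z1 (z1,z2)) \<and>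
              pairing (om' (z1,z2)) (Z1bar (z1,z2)) = pairing (om (z1,z2)) (Z1bar (z1,z2)) \<and>
              pairing (om' (z1,z2)) (Treeb (z1,z2)) = pairing (om (z1,z2)) (Treeb (z1,z2)) \<and>
              A' (z1,z2) = A (z1,z2)"
      if p: "(z1,z2) \<in> S3" for z1 z2
    proof -
      have S: "z1 * cnj z1 + z2 * cnj z2 = 1" using S3_rel[OF p] .
      let ?p = "(z1,z2)"
      have e2: "extd vt1 ?p X Y = f2add (wedge vt1 om') (wedge theta (fscale A' (fconj vt1))) ?p X Y"
        "extd vt1 ?p X Y = f2add (wedge vt1 om) (wedge theta (fscale A (fconj vt1))) ?p X Y"
        if "tangent ?p X" "tangent ?p Y" for X Y
        using eq2 eq2' p that unfolding eq2_S3_def by blast+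
      have r: "pairing (fadd om' (fconj om') ?p) X = 0" "pairing (fadd om (fconj om) ?p) X = 0"
        if "tangent ?p X" for X
      proof -
        have z: "pairing (0,0,0,0) X = 0" by (cases X) (simp add: pairing_def)
        have "pairing (fadd om' (fconj om') ?p) X = pairing (0,0,0,0) X"
          using real' p that unfolding eq1_S3_def by blast
        moreover have "pairing (fadd om (fconj om) ?p) X = pairing (0,0,0,0) X"
          using real p that unfolding eq1_S3_def by blast
        ultimately show "pairing (fadd om' (fconj om') ?p) X = 0" "pairing (fadd om (fconj om) ?p) X = 0"
          using z by simp_all
      qed
      note tb = tangent_basis[of z1 z2]
      define d1 where "d1 = pairing (om' ?p) (Z1 ?p) - pairing (om ?p) (Z1 ?p)"
      define d2 where "d2 = pairing (om' ?p) (Z1bar ?p) - pairing (om ?p) (Z1bar ?p)"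
      define d3 where "d3 = pairing (om' ?p) (Treeb ?p) - pairing (om ?p) (Treeb ?p)"
      define a where "a = A' ?p - A ?p"
      define c where "c = \<phi> ?p"
      have Fn: "F ?p \<noteq> 0" using Fne[OF p] .
      have ca: "F ?p * d2 + F ?p * c * d1 = 0"
        using e2(1)[OF tb(1) tb(2)] e2(2)[OF tb(1) tb(2)]
        unfolding vt1_def rhs_pairs[OF S] d1_def d2_def c_def by (simp add: algebra_simps)
      have cb: "F ?p * d3 + a * F ?p * cnj c = 0"
        using e2(1)[OF tb(1) tb(3)] e2(2)[OF tb(1) tb(3)]
        unfolding vt1_def rhs_pairs[OF S] d3_def a_def c_def Freal by (simp add: algebra_simps)
      have cc: "F ?p * c * d3 + a * F ?p = 0"
        using e2(1)[OF tb(2) tb(3)] e2(2)[OF tb(2) tb(3)]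
        unfolding vt1_def rhs_pairs[OF S] d3_def a_def c_def Freal by (simp add: algebra_simps)
      have cr: "d1 + cnj d2 = 0"
      proof -
        have h1: "pairing (om' ?p) (Z1 ?p) + cnj (pairing (om' ?p) (Z1bar ?p)) = 0"
          using r(1)[OF tb(1)] unfolding pairing_fadd pairing_fconj vconj_basis .
        have h2: "pairing (om ?p) (Z1 ?p) + cnj (pairing (om ?p) (Z1bar ?p)) = 0"
          using r(2)[OF tb(1)] unfolding pairing_fadd pairing_fconj vconj_basis .
        show ?thesis unfolding d1_def d2_def complex_cnj_diff add_diff_add[symmetric] h1 h2 by simp
      qed
      have cl: "cmod c < 1" using small' p unfolding c_def by blast
      have ccn: "c * cnj c \<noteq> 1"
      proof
        assume "c * cnj c = 1"
        then have "complex_of_real ((cmod c)^2) = 1" by (simp only: complex_norm_square)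
        then have "(cmod c)^2 = 1" by (metis of_real_eq_1_iff)
        with cl show False by (simp add: abs_square_eq_1)
      qed
      have "F ?p * (d3 + a * cnj c) = 0" using cb by (simp add: algebra_simps)
      then have "d3 + a * cnj c = 0" using Fn by simp
      then have d3a: "d3 = - (a * cnj c)" by (simp add: eq_neg_iff_add_eq_0)
      have "F ?p * (a * (1 - c * cnj c)) = 0" using cc unfolding d3a by (simp add: algebra_simps)
      then have "a * (1 - c * cnj c) = 0" using Fn by simp
      then have a0: "a = 0" using ccn by simp
      then have d30: "d3 = 0" using d3a by simp
      have "F ?p * (d2 + c * d1) = 0" using ca by (simp add: algebra_simps)
      then have "d2 + c * d1 = 0" using Fn by simp
      then have d2e: "d2 = - (c * d1)" by (simp add: eq_neg_iff_add_eq_0)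
      have "d1 - cnj c * cnj d1 = 0" using cr unfolding d2e by simp
      then have "d1 = cnj c * cnj d1" by simp
      then have "cmod d1 = cmod c * cmod d1" by (metis complex_mod_cnj norm_mult)
      then have "cmod d1 * (1 - cmod c) = 0" by (simp add: algebra_simps)
      then have d10: "d1 = 0" using cl by simp
      then have d20: "d2 = 0" using d2e by simp
      show ?thesis using d10 d20 d30 a0 unfolding d1_def d2_def d3_def a_def by simp
    qed
    have "eq1_S3 om' om"
      unfolding eq1_S3_def
    proof (intro ballI allI impI)
      fix p X assume p: "p \<in> S3" and X: "tangent p X"
      obtain z1 z2 where pz: "p = (z1,z2)" by (cases p)
      have S: "z1 * cnj z1 + z2 * cnj z2 = 1" using S3_rel p pz by blast
      obtain x1 x2 x3 where Xe: "X = vcomb x1 x2 x3 (Z1 (z1,z2)) (Z1bar (z1,z2)) (Treeb (z1,z2))"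
        using decomp[OF S X[unfolded pz]] by blast
      show "pairing (om' p) X = pairing (om p) X"
        unfolding Xe pairing_vcomb pz using pw p pz by simp
    qed
    moreover have "\<forall>p\<in>S3. A' p = A p" using pw by auto
    ultimately show ?thesis by blast
  qed
  have "is_conn_torsion vt1 om A" unfolding is_conn_torsion_def using eq2 real by blast
  then show ?thesis using uniq by blast
qed

end
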